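(* Let $f\in(0,1)$ be a target frequency, $\epsilon>0$, $K,P\in\mathbb{Z}_{\ge1}$, and $\eta_g,\eta_s\in(0,1)$. Let $c$ be a candidate pattern whose true frequency $f_c\in[0,1]$ is the fraction of data owners whose local data contain $c$. Suppose $c$ has been responded to in $m_c\ge 1$ rounds, in each of which $P$ data owners respond, so $n_c=Pm_c$, and its accumulated response is $$r_c=\sum_{k=1}^{n_c} B_k+\sum_{\ell=1}^{m_c} G_\ell,$$ where $B_1,\dots,B_{n_c}$ are i.i.d. Bernoulli$(f_c)$ random variables (indicators that the sampled responding data owners contain $c$), $G_1,\dots,G_{m_c}$ are i.i.d. two-sided geometric random variables with parameter $\alpha=e^{-\epsilon/K}$, and the $B_k$ are independent of the $G_\ell$. Then $c$ is a frequent pattern (i.e. $f_c\ge f$) with confidence $(1-\eta_g)(1-\eta_s)$ when $$\frac{r_c}{n_c}-\sqrt{\frac{2e^{-\epsilon/K}}{2(1-e^{-\epsilon/K})^2P^2m_c\eta_g}}-\sqrt{\frac{\ln\eta_s}{-2n_c}}\ \ge\ f;$$ that is, with probability at least $(1-\eta_g)(1-\eta_s)$ one has $f_c\ge \frac{r_c}{n_c}-\sqrt{\frac{2e^{-\epsilon/K}}{2(1-e^{-\epsilon/K})^2P^2m_c\eta_g}}-\sqrt{\frac{\ln\eta_s}{-2n_c}}$, so that whenever the left-hand side of the displayed inequality is at least $f$, $f_c\ge f$.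
   Context: A two-sided geometric random variable $G(\alpha)$, $\alpha\in(0,1)$, has $\mathbb{P}(G(\alpha)=x)=\frac{1-\alpha}{1+\alpha}\alpha^{|x|}$ for $x\in\mathbb{Z}$; it arises as the aggregate of the distributed Pólya noises added by the $P$ responders of a candidate in one round. A pattern is frequent if its frequency among the data owners is at least the target frequency $f$. *)

theory Defs
  imports "HOL-Probability.Probability"
begin

definition two_sided_geom_prob :: "real \<Rightarrow> int \<Rightarrow> real" where
  "two_sided_geom_prob \<alpha> x = (1 - \<alpha>) / (1 + \<alpha>) * \<alpha> ^ nat \<bar>x\<bar>"

end

theory Submission
  imports Defs
begin


lemma sq_series:
  fixes c :: real
  assumes "0 \<le> c" "c < 1"
  shows "(\<lambda>n. real n ^ 2 * c ^ n) sums (c * (1 + c) / (1 - c) ^ 3)"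
proof -
  have "(\<lambda>n. diffs (\<lambda>n. real n) n * c ^ n) sums ((1 + c) / (1 - c) ^ 3)"
  proof (rule termdiffs_sums_strong[where K=1])
    fix z :: real assume "norm z < 1"
    then show "(\<lambda>n. real n * z ^ n) sums (z / (1 - z)\<^sup>2)"
      using geometric_sums_times_n[of z] by (simp add: mult.commute)
  next
    define d where "d = 1 - c"
    have d: "d \<noteq> 0" "c = 1 - d" using assms by (auto simp: d_def)
    show "((\<lambda>z. z / (1 - z)\<^sup>2) has_field_derivative ((1 + c) / (1 - c) ^ 3)) (at c)"
      apply (rule derivative_eq_intros refl | simp)+
      unfolding d(2) using d(1) apply simp
      by (simp add: field_simps power2_eq_square power3_eq_cube) (simp add: divide_simps algebra_simps)
  qed (use assms in auto)
  then have "(\<lambda>n. c * (real (Suc n) ^ 2 * c ^ n)) sums (c * ((1 + c) / (1 - c) ^ 3))"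
    by (intro sums_mult) (simp add: diffs_def power2_eq_square)
  then have "(\<lambda>n. real (Suc n) ^ 2 * c ^ Suc n) sums (c * (1 + c) / (1 - c) ^ 3)"
    by (simp add: algebra_simps)
  then show ?thesis
    by (subst (asm) sums_Suc_iff) simp
qed



lemma tsg_neg: "two_sided_geom_prob a (- x) = two_sided_geom_prob a x"
  by (simp add: two_sided_geom_prob_def)

lemma (in prob_space) geom_sq_nn:
  fixes Y :: "'a \<Rightarrow> int" and \<alpha> :: real and s :: real
  assumes Y[measurable]: "Y \<in> measurable M (count_space UNIV)" and \<alpha>: "0 < \<alpha>" "\<alpha> < 1"
    and pY: "\<And>x. prob {\<omega>\<in>space M. Y \<omega> = x} = two_sided_geom_prob \<alpha> x"
    and s: "(\<lambda>n. real n ^ 2 * \<alpha> ^ n) sums s"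
  shows "(\<integral>\<^sup>+\<omega>. ennreal ((real_of_int (Y \<omega>))^2) \<partial>M) = ennreal (2 * ((1 - \<alpha>) / (1 + \<alpha>)) * s)"
proof -
  define S where "S j = {\<omega>\<in>space M. nat \<bar>Y \<omega>\<bar> = j}" for j
  have S_ev[measurable]: "S j \<in> sets M" for j unfolding S_def by measurable
  have pt: "ennreal ((real_of_int (Y \<omega>))^2) = (\<Sum>j. ennreal (real j ^ 2) * indicator (S j) \<omega>)"
    if "\<omega> \<in> space M" for \<omega>
  proof -
    have "(\<lambda>j. ennreal (real j ^ 2) * indicator (S j) \<omega>) = 
          (\<lambda>j. if j = nat \<bar>Y \<omega>\<bar> then ennreal (real j ^ 2) else 0)"
      using that by (auto simp: S_def indicator_def fun_eq_iff)
    moreover have "(\<lambda>j. if j = nat \<bar>Y \<omega>\<bar> then ennreal (real j ^ 2) else 0) sums ennreal (real (nat \<bar>Y \<omega>\<bar>) ^ 2)"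
      by (rule sums_single)
    moreover have "real (nat \<bar>Y \<omega>\<bar>) ^ 2 = (real_of_int (Y \<omega>))^2"
      by simp
    ultimately show ?thesis by (metis sums_unique)
  qed
  have mS: "emeasure M (S j) = ennreal (2 * ((1 - \<alpha>) / (1 + \<alpha>)) * \<alpha> ^ j)" if "j > 0" for j
  proof -
    have "S j = {\<omega>\<in>space M. Y \<omega> = int j} \<union> {\<omega>\<in>space M. Y \<omega> = - int j}"
      using that by (auto simp: S_def)
    then have "prob (S j) = prob {\<omega>\<in>space M. Y \<omega> = int j} + prob {\<omega>\<in>space M. Y \<omega> = - int j}"
      using that by (simp only:, intro finite_measure_Union) auto
    also have "\<dots> = 2 * ((1 - \<alpha>) / (1 + \<alpha>)) * \<alpha> ^ j"
      by (simp add: pY two_sided_geom_prob_def)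
    finally show ?thesis by (simp add: emeasure_eq_measure)
  qed
  have "(\<integral>\<^sup>+\<omega>. ennreal ((real_of_int (Y \<omega>))^2) \<partial>M) = (\<integral>\<^sup>+\<omega>. (\<Sum>j. ennreal (real j ^ 2) * indicator (S j) \<omega>) \<partial>M)"
    by (intro nn_integral_cong) (simp add: pt)
  also have "\<dots> = (\<Sum>j. \<integral>\<^sup>+\<omega>. ennreal (real j ^ 2) * indicator (S j) \<omega> \<partial>M)"
    by (intro nn_integral_suminf) measurable
  also have "\<dots> = (\<Sum>j. ennreal (real j ^ 2) * emeasure M (S j))"
    by (simp add: nn_integral_cmult_indicator)
  also have "\<dots> = (\<Sum>j. ennreal (2 * ((1 - \<alpha>) / (1 + \<alpha>)) * (real j ^ 2 * \<alpha> ^ j)))"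
  proof (intro suminf_cong)
    fix j
    show "ennreal (real j ^ 2) * emeasure M (S j) = ennreal (2 * ((1 - \<alpha>) / (1 + \<alpha>)) * (real j ^ 2 * \<alpha> ^ j))"
      using \<alpha> by (cases "j = 0") (simp_all add: mS ennreal_mult[symmetric] algebra_simps)
  qed
  also have "\<dots> = ennreal (\<Sum>j. 2 * ((1 - \<alpha>) / (1 + \<alpha>)) * (real j ^ 2 * \<alpha> ^ j))"
    using \<alpha> s by (intro suminf_ennreal2 summable_mult sums_summable[OF s]) auto
  also have "(\<Sum>j. 2 * ((1 - \<alpha>) / (1 + \<alpha>)) * (real j ^ 2 * \<alpha> ^ j)) = 2 * ((1 - \<alpha>) / (1 + \<alpha>)) * s"
    using sums_mult[OF s, of "2 * ((1 - \<alpha>) / (1 + \<alpha>))"] by (simp add: sums_iff)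
  finally show ?thesis .
qed

lemma (in prob_space) geom_facts:
  fixes Y :: "'a \<Rightarrow> int" and \<alpha> :: real
  assumes Y[measurable]: "Y \<in> measurable M (count_space UNIV)" and \<alpha>: "0 < \<alpha>" "\<alpha> < 1"
    and pY: "\<And>x. prob {\<omega>\<in>space M. Y \<omega> = x} = two_sided_geom_prob \<alpha> x"
  shows "integrable M (\<lambda>\<omega>. (real_of_int (Y \<omega>))^2)"
    and "expectation (\<lambda>\<omega>. (real_of_int (Y \<omega>))^2) = 2 * \<alpha> / (1 - \<alpha>)^2"
    and "integrable M (\<lambda>\<omega>. real_of_int (Y \<omega>))"
    and "expectation (\<lambda>\<omega>. real_of_int (Y \<omega>)) = 0"
proof -
  have s: "(\<lambda>n. real n ^ 2 * \<alpha> ^ n) sums (\<alpha> * (1 + \<alpha>) / (1 - \<alpha>) ^ 3)"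
    using sq_series[of \<alpha>] \<alpha> by simp
  have eq: "2 * ((1 - \<alpha>) / (1 + \<alpha>)) * (\<alpha> * (1 + \<alpha>) / (1 - \<alpha>) ^ 3) = 2 * \<alpha> / (1 - \<alpha>)^2"
  proof -
    have "(1 - \<alpha>) ^ 3 = (1 - \<alpha>)^2 * (1 - \<alpha>)" by (simp add: power3_eq_cube power2_eq_square)
    moreover have "1 - \<alpha> \<noteq> 0" "1 + \<alpha> \<noteq> 0" using \<alpha> by auto
    ultimately show ?thesis by (simp add: divide_simps del: power2_eq_square)
  qed
  have nn: "(\<integral>\<^sup>+\<omega>. ennreal ((real_of_int (Y \<omega>))^2) \<partial>M) = ennreal (2 * \<alpha> / (1 - \<alpha>)^2)"
    using geom_sq_nn[OF Y \<alpha> pY s] eq by simp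
  show i2: "integrable M (\<lambda>\<omega>. (real_of_int (Y \<omega>))^2)"
    by (rule integrableI_nn_integral_finite[OF _ _ nn]) auto
  show "expectation (\<lambda>\<omega>. (real_of_int (Y \<omega>))^2) = 2 * \<alpha> / (1 - \<alpha>)^2"
    using \<alpha> by (subst integral_eq_nn_integral) (auto simp: nn)
  show i1: "integrable M (\<lambda>\<omega>. real_of_int (Y \<omega>))"
    by (rule square_integrable_imp_integrable[OF _ i2]) simp
  have d: "distr M (count_space UNIV) Y = distr M (count_space UNIV) (\<lambda>\<omega>. - Y \<omega>)"
  proof (rule measure_eqI_countable[where A=UNIV])
    fix a :: int
    have "emeasure (distr M (count_space UNIV) Y) {a} = prob {\<omega>\<in>space M. Y \<omega> = a}"
      by (subst emeasure_distr) (auto simp: emeasure_eq_measure vimage_def Int_def conj_commute)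
    moreover have "(\<lambda>\<omega>. - Y \<omega>) -` {a} \<inter> space M = {\<omega>\<in>space M. Y \<omega> = - a}"
      by auto
    then have "emeasure (distr M (count_space UNIV) (\<lambda>\<omega>. - Y \<omega>)) {a} = prob {\<omega>\<in>space M. Y \<omega> = - a}"
      by (subst emeasure_distr) (auto simp: emeasure_eq_measure)
    ultimately show "emeasure (distr M (count_space UNIV) Y) {a} = emeasure (distr M (count_space UNIV) (\<lambda>\<omega>. - Y \<omega>)) {a}"
      by (simp add: pY tsg_neg)
  qed auto
  have "expectation (\<lambda>\<omega>. real_of_int (Y \<omega>)) = integral\<^sup>L (distr M (count_space UNIV) Y) real_of_int"
    by (subst integral_distr) auto
  also have "\<dots> = integral\<^sup>L (distr M (count_space UNIV) (\<lambda>\<omega>. - Y \<omega>)) real_of_int"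
    by (simp add: d)
  also have "\<dots> = - expectation (\<lambda>\<omega>. real_of_int (Y \<omega>))"
    by (subst integral_distr) auto
  finally show "expectation (\<lambda>\<omega>. real_of_int (Y \<omega>)) = 0" by simp
qed



lemma (in prob_space) sum_sq_expectation:
  fixes g :: "'i \<Rightarrow> 'a \<Rightarrow> real" and J :: "'i set"
  assumes J: "finite J" and ind: "indep_vars (\<lambda>_. borel) g J"
    and i1: "\<And>j. j \<in> J \<Longrightarrow> integrable M (g j)"
    and i2: "\<And>j. j \<in> J \<Longrightarrow> integrable M (\<lambda>\<omega>. (g j \<omega>)^2)"
    and e1: "\<And>j. j \<in> J \<Longrightarrow> expectation (g j) = 0"
    and e2: "\<And>j. j \<in> J \<Longrightarrow> expectation (\<lambda>\<omega>. (g j \<omega>)^2) = v"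
  shows "integrable M (\<lambda>\<omega>. (\<Sum>j\<in>J. g j \<omega>)^2)"
    and "expectation (\<lambda>\<omega>. (\<Sum>j\<in>J. g j \<omega>)^2) = real (card J) * v"
proof -
  have sq: "(\<lambda>\<omega>. (\<Sum>j\<in>J. g j \<omega>)^2) = (\<lambda>\<omega>. \<Sum>i\<in>J. \<Sum>j\<in>J. g i \<omega> * g j \<omega>)"
    by (simp add: power2_eq_square sum_product)
  have pr: "integrable M (\<lambda>\<omega>. g i \<omega> * g j \<omega>) \<and>
            expectation (\<lambda>\<omega>. g i \<omega> * g j \<omega>) = (if i = j then v else 0)"
    if "i \<in> J" "j \<in> J" for i j
  proof (cases "i = j")
    case True
    then show ?thesis using i2[OF that(1)] e2[OF that(1)] by (simp add: power2_eq_square)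
  next
    case False
    have ind2: "indep_vars (\<lambda>_. borel) g {i, j}"
      using that by (intro indep_vars_subset[OF ind]) auto
    have "integrable M (\<lambda>\<omega>. \<Prod>k\<in>{i,j}. g k \<omega>)"
      using that by (intro indep_vars_integrable[OF _ ind2]) (auto intro: i1)
    moreover have "expectation (\<lambda>\<omega>. \<Prod>k\<in>{i,j}. g k \<omega>) = (\<Prod>k\<in>{i,j}. expectation (g k))"
      using that by (intro indep_vars_lebesgue_integral[OF _ ind2]) (auto intro: i1)
    ultimately show ?thesis using False that e1 by simp
  qed
  show "integrable M (\<lambda>\<omega>. (\<Sum>j\<in>J. g j \<omega>)^2)"
    unfolding sq by (rule Bochner_Integration.integrable_sum, rule Bochner_Integration.integrable_sum) (use pr in auto)
  have "expectation (\<lambda>\<omega>. (\<Sum>j\<in>J. g j \<omega>)^2) = (\<Sum>i\<in>J. \<Sum>j\<in>J. expectation (\<lambda>\<omega>. g i \<omega> * g j \<omega>))"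
    unfolding sq
    apply (subst Bochner_Integration.integral_sum)
     apply (rule Bochner_Integration.integrable_sum) apply (use pr in auto)[1]
    apply (rule sum.cong, rule refl)
    apply (subst Bochner_Integration.integral_sum)
     apply (use pr in auto)
    done
  also have "\<dots> = (\<Sum>i\<in>J. \<Sum>j\<in>J. (if i = j then v else 0))"
    using pr by (intro sum.cong refl) auto
  also have "\<dots> = real (card J) * v"
    using J by (simp add: sum.delta)
  finally show "expectation (\<lambda>\<omega>. (\<Sum>j\<in>J. g j \<omega>)^2) = real (card J) * v" .
qed



lemma (in prob_space) geom_symm:
  fixes Y :: "'a \<Rightarrow> int" and \<alpha> :: real
  assumes Y[measurable]: "Y \<in> measurable M (count_space UNIV)"
    and pY: "\<And>x. prob {\<omega>\<in>space M. Y \<omega> = x} = two_sided_geom_prob \<alpha> x"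
  shows "distr M (count_space UNIV) Y = distr M (count_space UNIV) (\<lambda>\<omega>. - Y \<omega>)"
proof (rule measure_eqI_countable[where A=UNIV])
  fix a :: int
  have "emeasure (distr M (count_space UNIV) Y) {a} = prob {\<omega>\<in>space M. Y \<omega> = a}"
    by (subst emeasure_distr) (auto simp: emeasure_eq_measure vimage_def Int_def conj_commute)
  moreover have "(\<lambda>\<omega>. - Y \<omega>) -` {a} \<inter> space M = {\<omega>\<in>space M. Y \<omega> = - a}"
    by auto
  then have "emeasure (distr M (count_space UNIV) (\<lambda>\<omega>. - Y \<omega>)) {a} = prob {\<omega>\<in>space M. Y \<omega> = - a}"
    by (subst emeasure_distr) (auto simp: emeasure_eq_measure)
  ultimately show "emeasure (distr M (count_space UNIV) Y) {a} = emeasure (distr M (count_space UNIV) (\<lambda>\<omega>. - Y \<omega>)) {a}"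
    by (simp add: pY tsg_neg)
qed auto

theorem theorem3:
  fixes M :: "'w measure"
    and f \<epsilon> \<eta>g \<eta>s fc :: real
    and K P m n :: nat
    and X :: "nat + nat \<Rightarrow> 'w \<Rightarrow> int"
    and r :: "'w \<Rightarrow> real"
  assumes "prob_space M"
    and "0 < f" "f < 1" "0 < \<epsilon>" "1 \<le> K" "1 \<le> P"
    and "0 < \<eta>g" "\<eta>g < 1" "0 < \<eta>s" "\<eta>s < 1"
    and "0 \<le> fc" "fc \<le> 1"
    and "1 \<le> m" "n = P * m"
    and indep: "prob_space.indep_vars M (\<lambda>_. count_space UNIV) X
                  (Inl ` {..<n} \<union> Inr ` {..<m})"
    and bern_vals: "\<And>k \<omega>. k < n \<Longrightarrow> \<omega> \<in> space M \<Longrightarrow> X (Inl k) \<omega> \<in> {0, 1}"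
    and bern_prob: "\<And>k. k < n \<Longrightarrow> measure M {\<omega> \<in> space M. X (Inl k) \<omega> = 1} = fc"
    and geom: "\<And>l x. l < m \<Longrightarrow>
                 measure M {\<omega> \<in> space M. X (Inr l) \<omega> = x}
                   = two_sided_geom_prob (exp (- \<epsilon> / real K)) x"
    and r_def: "\<And>\<omega>. r \<omega> = (\<Sum>k<n. real_of_int (X (Inl k) \<omega>))
                          + (\<Sum>l<m. real_of_int (X (Inr l) \<omega>))"
  shows "measure M {\<omega> \<in> space M.
            fc \<ge> r \<omega> / real n
                 - sqrt (2 * exp (- \<epsilon> / real K)
                         / (2 * (1 - exp (- \<epsilon> / real K))\<^sup>2 * (real P)\<^sup>2 * real m * \<eta>g))
                 - sqrt (ln \<eta>s / (- 2 * real n))}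
         \<ge> (1 - \<eta>g) * (1 - \<eta>s)"
proof -
  interpret prob_space M by fact
  define \<alpha> where "\<alpha> = exp (- \<epsilon> / real K)"
  have \<alpha>: "0 < \<alpha>" "\<alpha> < 1" using assms by (auto simp: \<alpha>_def)
  define I :: "(nat + nat) set" where "I = Inl ` {..<n}"
  define J :: "(nat + nat) set" where "J = Inr ` {..<m}"
  define Y where "Y i \<omega> = real_of_int (X i \<omega>)" for i \<omega>
  have n_pos: "n > 0" using assms by simp
  have IJ: "I \<inter> J = {}" "finite I" "finite J" "card I = n" "card J = m"
    using assms unfolding I_def J_def by (auto simp: card_image)
  have "Inr 0 \<in> J" using assms by (auto simp: J_def)
  then have Jne: "J \<noteq> {}" by auto
  have indX: "indep_vars (\<lambda>_. count_space UNIV) X (I \<union> J)"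
    using indep unfolding I_def J_def .
  have rvX[measurable]: "X i \<in> measurable M (count_space UNIV)" if "i \<in> I \<union> J" for i
    using indX that unfolding indep_vars_def by auto
  have indY: "indep_vars (\<lambda>_. borel) Y (I \<union> J)"
    unfolding Y_def by (rule indep_vars_compose2[OF indX]) auto
  have rvY[measurable]: "Y i \<in> borel_measurable M" if "i \<in> I \<union> J" for i
    using indY that unfolding indep_vars_def by auto

  define s where "s = sqrt (ln \<eta>s / (- 2 * real n))"
  have lns: "ln \<eta>s < 0" using assms by simp
  have s2: "s^2 = ln \<eta>s / (- 2 * real n)" "s \<ge> 0"
    using lns n_pos unfolding s_def by (auto simp: divide_simps)
  interpret H: Hoeffding_ineq M I Y "\<lambda>_. 0" "\<lambda>_. 1" "\<Sum>i\<in>I. expectation (Y i)"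
  proof unfold_locales
    show "finite I" by fact
    show "indep_vars (\<lambda>_. borel) Y I" by (rule indep_vars_subset[OF indY]) auto
    fix i assume "i \<in> I"
    then show "AE x in M. Y i x \<in> {0..1}"
      using bern_vals by (intro AE_I2) (auto simp: Y_def I_def, fastforce+)
  qed simp
  have EY: "expectation (Y i) = fc" if "i \<in> I" for i
  proof -
    have "expectation (Y i) = expectation (indicator {\<omega>\<in>space M. X i \<omega> = 1})"
      using that bern_vals by (intro Bochner_Integration.integral_cong) (auto simp: Y_def I_def indicator_def)
    also have "\<dots> = prob {\<omega>\<in>space M. X i \<omega> = 1}"
      by (simp add: Int_absorb2 subset_eq)
    finally show ?thesis using that bern_prob by (auto simp: I_def)
  qed
  have H1: "prob {\<omega>\<in>space M. (\<Sum>i\<in>I. Y i \<omega>) \<ge> real n * fc + real n * s} \<le> \<eta>s"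
  proof -
    have "prob {\<omega>\<in>space M. (\<Sum>i\<in>I. Y i \<omega>) \<ge> (\<Sum>i\<in>I. expectation (Y i)) + real n * s}
          \<le> exp (-2 * (real n * s)\<^sup>2 / (\<Sum>i\<in>I. (1 - 0)\<^sup>2))"
      using s2 n_pos IJ by (intro H.Hoeffding_ineq_ge) auto
    also have "(\<Sum>i\<in>I. expectation (Y i)) = real n * fc"
      using EY IJ by simp
    also have "-2 * (real n * s)\<^sup>2 / (\<Sum>i\<in>I. (1 - 0)\<^sup>2) = ln \<eta>s"
      using IJ s2 n_pos by (simp add: power_mult_distrib power2_eq_square field_simps)
    finally show ?thesis using assms by simp
  qed
  define A where "A = {\<omega>\<in>space M. (\<Sum>i\<in>I. Y i \<omega>) < real n * fc + real n * s}"
  have A_ev[measurable]: "A \<in> sets M" unfolding A_def using IJ by measurable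
  have PA: "prob A \<ge> 1 - \<eta>s"
  proof -
    have "A = space M - {\<omega>\<in>space M. (\<Sum>i\<in>I. Y i \<omega>) \<ge> real n * fc + real n * s}"
      unfolding A_def by auto
    then have "prob A = 1 - prob {\<omega>\<in>space M. (\<Sum>i\<in>I. Y i \<omega>) \<ge> real n * fc + real n * s}"
      using IJ by (simp add: prob_compl)
    then show ?thesis using H1 by simp
  qed

  define V where "V = 2 * \<alpha> / (1 - \<alpha>)^2"
  have V_pos: "V > 0" using \<alpha> by (simp add: V_def)
  have gf: "integrable M (\<lambda>\<omega>. (Y j \<omega>)^2) \<and> expectation (\<lambda>\<omega>. (Y j \<omega>)^2) = V
            \<and> integrable M (Y j) \<and> expectation (Y j) = 0" if jJ: "j \<in> J" for j
  proof -
    obtain l where l: "j = Inr l" "l < m" using jJ by (auto simp: J_def)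
    have m: "X j \<in> measurable M (count_space UNIV)" using jJ by auto
    have p: "\<And>x. prob {\<omega>\<in>space M. X j \<omega> = x} = two_sided_geom_prob \<alpha> x"
      using geom l by (simp add: \<alpha>_def)
    have Yj: "Y j = (\<lambda>\<omega>. real_of_int (X j \<omega>))" by (simp add: Y_def fun_eq_iff)
    show ?thesis using geom_facts[OF m \<alpha> p] by (simp add: Yj V_def)
  qed
  have indJ: "indep_vars (\<lambda>_. borel) Y J" by (rule indep_vars_subset[OF indY]) auto
  define Z where "Z \<omega> = (\<Sum>j\<in>J. Y j \<omega>)" for \<omega>
  have Zm[measurable]: "Z \<in> borel_measurable M" unfolding Z_def using IJ by measurable
  have Z2: "integrable M (\<lambda>\<omega>. (Z \<omega>)^2)" "expectation (\<lambda>\<omega>. (Z \<omega>)^2) = real m * V"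
    using sum_sq_expectation[OF IJ(3) indJ, of V] gf IJ unfolding Z_def by auto
  have EZ: "expectation Z = 0"
    unfolding Z_def using gf by (subst Bochner_Integration.integral_sum) auto
  define t where "t = sqrt (2 * \<alpha> / (2 * (1 - \<alpha>)\<^sup>2 * (real P)\<^sup>2 * real m * \<eta>g))"
  define a where "a = real n * t"
  have t_pos: "t > 0" using \<alpha> assms unfolding t_def by simp
  have a_pos: "a > 0" using t_pos n_pos by (simp add: a_def)
  have a2: "a^2 = real m * V / (2 * \<eta>g)"
  proof -
    define D where "D = (1 - \<alpha>)\<^sup>2"
    have D: "D > 0" using \<alpha> by (simp add: D_def)
    have t2: "t^2 = 2 * \<alpha> / (2 * D * (real P)\<^sup>2 * real m * \<eta>g)"
      unfolding t_def D_def using \<alpha> assms by (intro real_sqrt_pow2) simp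
    have Veq: "V = 2 * \<alpha> / D" by (simp add: V_def D_def)
    have pos: "real P > 0" "real m > 0" "\<eta>g > 0" using assms by auto
    have "a^2 = (real P * real m)^2 * t^2" using assms by (simp add: a_def power_mult_distrib)
    also have "\<dots> = (real P * real m)^2 * (2 * \<alpha> / (2 * D * (real P)\<^sup>2 * real m * \<eta>g))"
      by (simp add: t2)
    also have "\<dots> = real m * (2 * \<alpha> / D) / (2 * \<eta>g)"
      using pos D by (simp add: field_simps power2_eq_square)
    finally show ?thesis by (simp add: Veq)
  qed
  have cheb: "prob {\<omega>\<in>space M. \<bar>Z \<omega> - expectation Z\<bar> \<ge> a} \<le> variance Z / a\<^sup>2"
    by (rule Chebyshev_inequality[OF Zm Z2(1) a_pos])
  have cheb2: "prob {\<omega>\<in>space M. \<bar>Z \<omega>\<bar> \<ge> a} \<le> 2 * \<eta>g"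
  proof -
    have "variance Z = real m * V" using EZ Z2 by simp
    then have "variance Z / a\<^sup>2 = 2 * \<eta>g"
      using a2 V_pos assms a_pos by (simp add: divide_simps) (simp add: algebra_simps)
    then show ?thesis using cheb EZ by simp
  qed

  have symm: "prob {\<omega>\<in>space M. Z \<omega> \<ge> a} = prob {\<omega>\<in>space M. - Z \<omega> \<ge> a}"
  proof -
    let ?N = "PiM J (\<lambda>_. count_space (UNIV :: int set))"
    define h where "h x = (\<Sum>j\<in>J. real_of_int (x j))" for x :: "nat + nat \<Rightarrow> int"
    have hm[measurable]: "h \<in> borel_measurable ?N" unfolding h_def using IJ by measurable
    have S_sets[measurable]: "{x\<in>space ?N. h x \<ge> a} \<in> sets ?N" by measurable
    have Gm: "(\<lambda>\<omega>. \<lambda>j\<in>J. X j \<omega>) \<in> measurable M ?N"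
      by (rule measurable_restrict) auto
    have Gnm: "(\<lambda>\<omega>. \<lambda>j\<in>J. - X j \<omega>) \<in> measurable M ?N"
      by (rule measurable_restrict) auto
    have indXJ: "indep_vars (\<lambda>_. count_space UNIV) X J" by (rule indep_vars_subset[OF indX]) auto
    have indNJ: "indep_vars (\<lambda>_. count_space UNIV) (\<lambda>j \<omega>. - X j \<omega>) J"
      by (rule indep_vars_compose2[OF indXJ]) auto
    have D1: "distr M ?N (\<lambda>\<omega>. \<lambda>j\<in>J. X j \<omega>) = PiM J (\<lambda>j. distr M (count_space UNIV) (X j))"
      using indep_vars_iff_distr_eq_PiM'[of J X "\<lambda>_. count_space UNIV"] Jne indXJ by auto
    have D2: "distr M ?N (\<lambda>\<omega>. \<lambda>j\<in>J. - X j \<omega>) = PiM J (\<lambda>j. distr M (count_space UNIV) (\<lambda>\<omega>. - X j \<omega>))"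
      using indep_vars_iff_distr_eq_PiM'[of J "\<lambda>j \<omega>. - X j \<omega>" "\<lambda>_. count_space UNIV"] Jne indNJ by auto
    have same: "PiM J (\<lambda>j. distr M (count_space UNIV) (X j)) = PiM J (\<lambda>j. distr M (count_space UNIV) (\<lambda>\<omega>. - X j \<omega>))"
    proof (intro PiM_cong refl)
      fix j assume jJ: "j \<in> J"
      obtain l where l: "j = Inr l" "l < m" using jJ by (auto simp: J_def)
      have mj: "X j \<in> measurable M (count_space UNIV)" using jJ by auto
      show "distr M (count_space UNIV) (X j) = distr M (count_space UNIV) (\<lambda>\<omega>. - X j \<omega>)"
        by (rule geom_symm[OF mj]) (use geom l in auto)
    qed
    have "prob {\<omega>\<in>space M. Z \<omega> \<ge> a} = measure (distr M ?N (\<lambda>\<omega>. \<lambda>j\<in>J. X j \<omega>)) {x\<in>space ?N. h x \<ge> a}"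
      by (subst measure_distr[OF Gm S_sets]) (auto simp: h_def Z_def Y_def space_PiM intro!: arg_cong[where f=prob])
    also have "\<dots> = measure (distr M ?N (\<lambda>\<omega>. \<lambda>j\<in>J. - X j \<omega>)) {x\<in>space ?N. h x \<ge> a}"
      by (simp only: D1 D2 same)
    also have "\<dots> = prob {\<omega>\<in>space M. - Z \<omega> \<ge> a}"
      by (subst measure_distr[OF Gnm S_sets]) (auto simp: h_def Z_def Y_def sum_negf space_PiM intro!: arg_cong[where f=prob])
    finally show ?thesis .
  qed
  have PZ: "prob {\<omega>\<in>space M. Z \<omega> \<ge> a} \<le> \<eta>g"
  proof -
    have "{\<omega>\<in>space M. \<bar>Z \<omega>\<bar> \<ge> a} = {\<omega>\<in>space M. Z \<omega> \<ge> a} \<union> {\<omega>\<in>space M. - Z \<omega> \<ge> a}"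
      by auto
    then have "prob {\<omega>\<in>space M. \<bar>Z \<omega>\<bar> \<ge> a} = prob {\<omega>\<in>space M. Z \<omega> \<ge> a} + prob {\<omega>\<in>space M. - Z \<omega> \<ge> a}"
      using a_pos by (simp only:, intro finite_measure_Union) auto
    then show ?thesis using cheb2 symm by simp
  qed
  define Bg where "Bg = {\<omega>\<in>space M. Z \<omega> < a}"
  have Bg_ev[measurable]: "Bg \<in> sets M" unfolding Bg_def by measurable
  have PB: "prob Bg \<ge> 1 - \<eta>g"
  proof -
    have "Bg = space M - {\<omega>\<in>space M. Z \<omega> \<ge> a}"
      unfolding Bg_def by auto
    then have "prob Bg = 1 - prob {\<omega>\<in>space M. Z \<omega> \<ge> a}"
      by (simp add: prob_compl)
    then show ?thesis using PZ by simp
  qed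
  define F1 where "F1 \<omega> = (\<Sum>i\<in>I. Y i \<omega>)" for \<omega>
  have F1m[measurable]: "F1 \<in> borel_measurable M" unfolding F1_def using IJ by measurable
  have iv: "indep_var borel F1 borel Z"
  proof -
    have "indep_var borel ((\<lambda>f. \<Sum>i\<in>I. f i) \<circ> (\<lambda>\<omega>. restrict (\<lambda>i. Y i \<omega>) I))
                     borel ((\<lambda>f. \<Sum>i\<in>J. f i) \<circ> (\<lambda>\<omega>. restrict (\<lambda>i. Y i \<omega>) J))"
      using IJ by (intro indep_var_compose[OF indep_var_restrict[OF indY]]) auto
    also have "((\<lambda>f. \<Sum>i\<in>I. f i) \<circ> (\<lambda>\<omega>. restrict (\<lambda>i. Y i \<omega>) I)) = F1"
      by (auto simp: F1_def fun_eq_iff intro!: sum.cong)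
    also have "((\<lambda>f. \<Sum>i\<in>J. f i) \<circ> (\<lambda>\<omega>. restrict (\<lambda>i. Y i \<omega>) J)) = Z"
      by (auto simp: Z_def fun_eq_iff intro!: sum.cong)
    finally show ?thesis .
  qed
  have PAB: "prob (A \<inter> Bg) = prob A * prob Bg"
  proof -
    have "A \<inter> Bg = (\<lambda>\<omega>. (F1 \<omega>, Z \<omega>)) -` ({..< real n * fc + real n * s} \<times> {..<a}) \<inter> space M"
      by (auto simp: A_def Bg_def F1_def)
    moreover have "A = F1 -` {..< real n * fc + real n * s} \<inter> space M"
      by (auto simp: A_def F1_def)
    moreover have "Bg = Z -` {..<a} \<inter> space M"
      by (auto simp: Bg_def)
    ultimately show ?thesis
      using indep_varD[OF iv, of "{..< real n * fc + real n * s}" "{..<a}"] by simp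
  qed
  have r_eq: "r = (\<lambda>\<omega>. F1 \<omega> + Z \<omega>)"
    by (simp add: fun_eq_iff r_def F1_def Z_def I_def J_def Y_def sum.reindex)
  define G where "G = {\<omega> \<in> space M. fc \<ge> r \<omega> / real n - t - s}"
  have G_ev: "G \<in> sets M" unfolding G_def r_eq by measurable
  have sub: "A \<inter> Bg \<subseteq> G"
  proof
    fix \<omega> assume "\<omega> \<in> A \<inter> Bg"
    then have w: "\<omega> \<in> space M" "F1 \<omega> < real n * fc + real n * s" "Z \<omega> < real n * t"
      by (auto simp: A_def Bg_def F1_def a_def)
    then have "r \<omega> < real n * (fc + s + t)" by (simp add: r_eq algebra_simps)
    then have "r \<omega> / real n < fc + s + t" using n_pos by (simp add: divide_simps mult.commute)
    then show "\<omega> \<in> G" using w by (simp add: G_def)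
  qed
  have "(1 - \<eta>g) * (1 - \<eta>s) \<le> prob Bg * prob A"
    using PA PB assms by (intro mult_mono) auto
  also have "\<dots> = prob (A \<inter> Bg)" by (simp add: PAB)
  also have "\<dots> \<le> prob G" using sub G_ev by (intro finite_measure_mono)
  finally have "(1 - \<eta>g) * (1 - \<eta>s) \<le> prob G" .
  then show ?thesis
    unfolding G_def t_def s_def \<alpha>_def .
qed

end
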